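(* Let $X$ be a real Banach lattice which is convex-transitive and such that every surjective linear isometry $T: X\to X$ is disjointness-preserving. If there exists an atom $x\in S_X$, then $X$ is one-dimensional.
   Context: $X$ is convex-transitive if $\overline{\mathrm{conv}}(\{T(y):T\in\mathcal{G}_X\})=B_X$ for every $y\in S_X$, where $\mathcal{G}_X$ is the group of surjective linear isometries of $X$. Elements $x,y$ are disjoint if $|x|\wedge|y|=0$; $T$ is disjointness-preserving if $T(x),T(y)$ are disjoint whenever $x,y$ are. A point $a\neq0$ is an atom if $\{v\in X: 0\le v\le|a|\}=\{\lambda|a|: 0\le\lambda\le1\}$. *)

theory Defs
  imports "HOL-Analysis.Analysis"
begin

text \<open>A real Banach lattice is modelled as a type of class banach (real Banach space)
  that is also an ordered real vector space whose order is a lattice (a Riesz space),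
  and whose norm is a lattice norm.\<close>

definition lat_abs :: "'a::{lattice, ab_group_add} \<Rightarrow> 'a" where
  "lat_abs x = sup x (- x)"

definition lattice_norm :: "('a::{real_normed_vector, lattice, ordered_real_vector}) itself \<Rightarrow> bool" where
  "lattice_norm _ \<longleftrightarrow> (\<forall>x y::'a. lat_abs x \<le> lat_abs y \<longrightarrow> norm x \<le> norm y)"

definition banach_lattice :: "('a::{banach, lattice, ordered_real_vector}) itself \<Rightarrow> bool" where
  "banach_lattice t \<longleftrightarrow> lattice_norm t"

definition isometry_group :: "('a::real_normed_vector \<Rightarrow> 'a) set" where
  "isometry_group = {T. linear T \<and> surj T \<and> (\<forall>x. norm (T x) = norm x)}"

definition convex_transitive :: "('a::real_normed_vector) itself \<Rightarrow> bool" where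
  "convex_transitive _ \<longleftrightarrow>
     (\<forall>y::'a. norm y = 1 \<longrightarrow>
        closure (convex hull {T y | T. T \<in> isometry_group}) = cball 0 1)"

definition disjoint_el :: "'a::{lattice, ab_group_add} \<Rightarrow> 'a \<Rightarrow> bool" where
  "disjoint_el x y \<longleftrightarrow> inf (lat_abs x) (lat_abs y) = 0"

definition disjointness_preserving :: "('a::{lattice, ab_group_add} \<Rightarrow> 'a) \<Rightarrow> bool" where
  "disjointness_preserving T \<longleftrightarrow> (\<forall>x y. disjoint_el x y \<longrightarrow> disjoint_el (T x) (T y))"

definition is_atom :: "'a::{lattice, ordered_real_vector} \<Rightarrow> bool" where
  "is_atom a \<longleftrightarrow> a \<noteq> 0 \<and>
     {v. 0 \<le> v \<and> v \<le> lat_abs a} = {l *\<^sub>R lat_abs a | l. 0 \<le> l \<and> l \<le> 1}"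

end

theory Submission
  imports Defs
begin


lemma sup_add_distrib: "sup x y + (z::'a::{lattice, ordered_real_vector}) = sup (x+z) (y+z)"
proof (rule antisym)
  show "sup (x+z) (y+z) \<le> sup x y + z" by (simp add: add_right_mono)
  have "x \<le> sup (x+z) (y+z) - z" "y \<le> sup (x+z) (y+z) - z"
    by (simp_all add: le_diff_eq)
  then have "sup x y \<le> sup (x+z) (y+z) - z" by simp
  then show "sup x y + z \<le> sup (x+z) (y+z)" by (simp add: le_diff_eq)
qed

lemma inf_add_distrib: "inf x y + (z::'a::{lattice, ordered_real_vector}) = inf (x+z) (y+z)"
proof (rule antisym)
  show "inf x y + z \<le> inf (x+z) (y+z)" by (simp add: add_right_mono)
  have "inf (x+z) (y+z) - z \<le> x" "inf (x+z) (y+z) - z \<le> y"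
    by (simp_all add: diff_le_eq)
  then have "inf (x+z) (y+z) - z \<le> inf x y" by (rule le_infI)
  then show "inf (x+z) (y+z) \<le> inf x y + z" by (metis diff_le_eq)
qed

lemma scaleR_sup: "0 \<le> t \<Longrightarrow> t *\<^sub>R sup x y = sup (t *\<^sub>R x) (t *\<^sub>R (y::'a::{lattice, ordered_real_vector}))"
proof (cases "t = 0")
  case False
  assume t: "0 \<le> t"
  show ?thesis
  proof (rule antisym)
    show "sup (t *\<^sub>R x) (t *\<^sub>R y) \<le> t *\<^sub>R sup x y" using t by (simp add: scaleR_left_mono)
    have it: "0 \<le> 1/t" using t by simp
    have "x = (1/t) *\<^sub>R (t *\<^sub>R x)" "y = (1/t) *\<^sub>R (t *\<^sub>R y)" using False by simp_all
    then have "x \<le> (1/t) *\<^sub>R sup (t *\<^sub>R x) (t *\<^sub>R y)" "y \<le> (1/t) *\<^sub>R sup (t *\<^sub>R x) (t *\<^sub>R y)"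
      using it by (metis scaleR_left_mono sup_ge1 sup_ge2)+
    then have "sup x y \<le> (1/t) *\<^sub>R sup (t *\<^sub>R x) (t *\<^sub>R y)" by (rule le_supI)
    then have "t *\<^sub>R sup x y \<le> t *\<^sub>R ((1/t) *\<^sub>R sup (t *\<^sub>R x) (t *\<^sub>R y))" using t by (metis scaleR_left_mono)
    then show "t *\<^sub>R sup x y \<le> sup (t *\<^sub>R x) (t *\<^sub>R y)" using False by simp
  qed
qed simp

lemma scaleR_inf: "0 \<le> t \<Longrightarrow> t *\<^sub>R inf x y = inf (t *\<^sub>R x) (t *\<^sub>R (y::'a::{lattice, ordered_real_vector}))"
proof (cases "t = 0")
  case False
  assume t: "0 \<le> t"
  show ?thesis
  proof (rule antisym)
    show "t *\<^sub>R inf x y \<le> inf (t *\<^sub>R x) (t *\<^sub>R y)" using t by (simp add: scaleR_left_mono)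
    have it: "0 \<le> 1/t" using t by simp
    have "x = (1/t) *\<^sub>R (t *\<^sub>R x)" "y = (1/t) *\<^sub>R (t *\<^sub>R y)" using False by simp_all
    then have "(1/t) *\<^sub>R inf (t *\<^sub>R x) (t *\<^sub>R y) \<le> x" "(1/t) *\<^sub>R inf (t *\<^sub>R x) (t *\<^sub>R y) \<le> y"
      using it by (metis scaleR_left_mono inf_le1 inf_le2)+
    then have "(1/t) *\<^sub>R inf (t *\<^sub>R x) (t *\<^sub>R y) \<le> inf x y" by (rule le_infI)
    then have "t *\<^sub>R ((1/t) *\<^sub>R inf (t *\<^sub>R x) (t *\<^sub>R y)) \<le> t *\<^sub>R inf x y" using t by (metis scaleR_left_mono)
    then show "inf (t *\<^sub>R x) (t *\<^sub>R y) \<le> t *\<^sub>R inf x y" using False by simp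
  qed
qed simp

lemma la_nonneg: "0 \<le> lat_abs (x::'a::{lattice, ordered_real_vector})"
proof -
  let ?s = "lat_abs x"
  have "x \<le> ?s" "-x \<le> ?s" by (simp_all add: lat_abs_def)
  then have "x + -x \<le> ?s + ?s" by (rule add_mono)
  then have "0 \<le> (2::real) *\<^sub>R ?s" by (simp add: scaleR_2)
  then have "(1/2) *\<^sub>R 0 \<le> (1/2::real) *\<^sub>R ((2::real) *\<^sub>R ?s)" by (rule scaleR_left_mono) simp
  then show ?thesis by simp
qed

lemma la_of_nonneg: "0 \<le> (x::'a::{lattice, ordered_real_vector}) \<Longrightarrow> lat_abs x = x"
proof -
  assume x: "0 \<le> x"
  then have "-x \<le> 0" by simp
  then have "-x \<le> x" using x by (rule order_trans)
  then show ?thesis unfolding lat_abs_def by (rule sup_absorb1)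
qed

lemma la_idem: "lat_abs (lat_abs (x::'a::{lattice, ordered_real_vector})) = lat_abs x"
  by (simp add: la_nonneg la_of_nonneg)

lemma la_neg: "lat_abs (- (x::'a::{lattice, ordered_real_vector})) = lat_abs x"
  unfolding lat_abs_def by (simp add: sup_commute)

lemma la_scale_pos: "0 \<le> t \<Longrightarrow> lat_abs (t *\<^sub>R (x::'a::{lattice, ordered_real_vector})) = t *\<^sub>R lat_abs x"
  unfolding lat_abs_def by (simp add: scaleR_sup)

lemma la_scale: "lat_abs (t *\<^sub>R (x::'a::{lattice, ordered_real_vector})) = \<bar>t\<bar> *\<^sub>R lat_abs x"
proof (cases "0 \<le> t")
  case True
  then show ?thesis by (simp add: la_scale_pos)
next
  case False
  then have "t *\<^sub>R x = (-t) *\<^sub>R (-x)" by simp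
  then have "lat_abs (t *\<^sub>R x) = (-t) *\<^sub>R lat_abs (-x)" using False la_scale_pos[of "-t" "-x"] by simp
  then show ?thesis using False by (simp add: la_neg)
qed

lemma la_triangle: "lat_abs (x + y) \<le> lat_abs x + lat_abs (y::'a::{lattice, ordered_real_vector})"
proof -
  have h1: "x \<le> lat_abs x" and h2: "-x \<le> lat_abs x" and h3: "y \<le> lat_abs y" and h4: "-y \<le> lat_abs y"
    unfolding lat_abs_def by (rule sup_ge1, rule sup_ge2, rule sup_ge1, rule sup_ge2)
  have 1: "x + y \<le> lat_abs x + lat_abs y" using h1 h3 by (rule add_mono)
  have 2: "-x + -y \<le> lat_abs x + lat_abs y" using h2 h4 by (rule add_mono)
  have 3: "-(x + y) \<le> lat_abs x + lat_abs y" using 2 by (simp only: minus_add_distrib)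
  show ?thesis unfolding lat_abs_def[of "x+y"] using 1 3 by (rule sup_least)
qed

lemma la_zero: "lat_abs (x::'a::{lattice, ordered_real_vector}) = 0 \<Longrightarrow> x = 0"
proof -
  assume h: "lat_abs x = 0"
  have h1: "x \<le> lat_abs x" and h2: "-x \<le> lat_abs x"
    unfolding lat_abs_def by (rule sup_ge1, rule sup_ge2)
  have "x \<le> 0" using h1 h by (simp only:)
  moreover have "-x \<le> 0" using h2 h by (simp only:)
  ultimately show "x = 0" by (metis antisym neg_le_0_iff_le)
qed

lemma riesz: "0 \<le> a \<Longrightarrow> 0 \<le> b \<Longrightarrow> 0 \<le> c \<Longrightarrow>
   inf c (a+b) \<le> inf c a + inf c (b::'a::{lattice, ordered_real_vector})"
proof -
  assume a: "0 \<le> a" and b: "0 \<le> b" and c: "0 \<le> c"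
  have e1: "inf c a + inf c b = inf (c + inf c b) (a + inf c b)" by (rule inf_add_distrib)
  have e2: "c + inf c b = inf (c + c) (b + c)"
    using inf_add_distrib[of c b c] add.commute[of c "inf c b"] by simp
  have e3: "a + inf c b = inf (c + a) (b + a)"
    using inf_add_distrib[of c b a] add.commute[of a "inf c b"] by simp
  have "c \<le> c + c" "c \<le> b + c" "c \<le> c + a" using a b c by (simp_all add: add_increasing add_increasing2)
  then have "inf c (a+b) \<le> inf (inf (c + c) (b + c)) (inf (c + a) (b + a))"
    by (simp add: le_infI1 le_infI2 add.commute)
  then show ?thesis using e1 e2 e3 by simp
qed

lemma dj_sym: "disjoint_el x y \<Longrightarrow> disjoint_el y (x::'a::{lattice, ordered_real_vector})"
  unfolding disjoint_el_def by (simp add: inf_commute)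

lemma dj_neg: "disjoint_el x y \<Longrightarrow> disjoint_el (-x) (y::'a::{lattice, ordered_real_vector})"
  unfolding disjoint_el_def by (simp add: la_neg)

lemma dj_add: "disjoint_el r a \<Longrightarrow> disjoint_el s a \<Longrightarrow> disjoint_el (r + s) (a::'a::{lattice, ordered_real_vector})"
  unfolding disjoint_el_def
proof -
  assume r: "inf (lat_abs r) (lat_abs a) = 0" and s: "inf (lat_abs s) (lat_abs a) = 0"
  have "inf (lat_abs (r+s)) (lat_abs a) \<le> inf (lat_abs r + lat_abs s) (lat_abs a)"
    using la_triangle inf_mono by blast
  also have "\<dots> = inf (lat_abs a) (lat_abs r + lat_abs s)" by (simp add: inf_commute)
  also have "\<dots> \<le> inf (lat_abs a) (lat_abs r) + inf (lat_abs a) (lat_abs s)"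
    by (rule riesz) (simp_all add: la_nonneg)
  also have "\<dots> = 0" using r s by (simp add: inf_commute)
  finally have "inf (lat_abs (r+s)) (lat_abs a) \<le> 0" .
  moreover have "0 \<le> inf (lat_abs (r+s)) (lat_abs a)" by (simp add: la_nonneg)
  ultimately show "inf (lat_abs (r+s)) (lat_abs a) = 0" by (rule antisym)
qed

lemma dj_scale: "disjoint_el r a \<Longrightarrow> disjoint_el (t *\<^sub>R r) (a::'a::{lattice, ordered_real_vector})"
  unfolding disjoint_el_def
proof -
  assume r: "inf (lat_abs r) (lat_abs a) = 0"
  define m where "m = max \<bar>t\<bar> 1"
  have m0: "0 \<le> m" "\<bar>t\<bar> \<le> m" "1 \<le> m" unfolding m_def by auto
  have "\<bar>t\<bar> *\<^sub>R lat_abs r \<le> m *\<^sub>R lat_abs r" using m0 by (simp add: scaleR_right_mono la_nonneg)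
  moreover have "lat_abs a \<le> m *\<^sub>R lat_abs a"
    using scaleR_right_mono[OF m0(3) la_nonneg[of a]] by simp
  ultimately have "inf (lat_abs (t *\<^sub>R r)) (lat_abs a) \<le> inf (m *\<^sub>R lat_abs r) (m *\<^sub>R lat_abs a)"
    unfolding la_scale by (rule inf_mono)
  also have "\<dots> = m *\<^sub>R inf (lat_abs r) (lat_abs a)" using m0 by (simp add: scaleR_inf)
  also have "\<dots> = 0" using r by simp
  finally have "inf (lat_abs (t *\<^sub>R r)) (lat_abs a) \<le> 0" .
  moreover have "0 \<le> inf (lat_abs (t *\<^sub>R r)) (lat_abs a)" by (simp add: la_nonneg)
  ultimately show "inf (lat_abs (t *\<^sub>R r)) (lat_abs a) = 0" by (rule antisym)
qed

lemma dj_diff: "disjoint_el r a \<Longrightarrow> disjoint_el s a \<Longrightarrow> disjoint_el (r - s) (a::'a::{lattice, ordered_real_vector})"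
  unfolding diff_conv_add_uminus by (intro dj_add dj_neg)

lemma dj_self_scale: "0 \<le> (a::'a::{lattice, ordered_real_vector}) \<Longrightarrow> a \<noteq> 0 \<Longrightarrow> disjoint_el (t *\<^sub>R a) a \<Longrightarrow> t = (0::real)"
proof (rule ccontr)
  assume a: "0 \<le> a" "a \<noteq> 0" and d: "disjoint_el (t *\<^sub>R a) a" and t: "t \<noteq> 0"
  have e: "inf (\<bar>t\<bar> *\<^sub>R a) a = 0" using d a by (simp add: disjoint_el_def la_scale la_of_nonneg)
  show False
  proof (cases "\<bar>t\<bar> \<le> 1")
    case True
    then have "\<bar>t\<bar> *\<^sub>R a \<le> 1 *\<^sub>R a" using a scaleR_right_mono by blast
    then have "\<bar>t\<bar> *\<^sub>R a = 0" using e by (simp add: inf_absorb1)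
    then show False using t a by simp
  next
    case False
    then have "1 *\<^sub>R a \<le> \<bar>t\<bar> *\<^sub>R a" using a scaleR_right_mono by (metis linorder_le_cases)
    then have "a = 0" using e by (simp add: inf_absorb2)
    then show False using a by simp
  qed
qed

lemma dj_part: "disjoint_el p q \<Longrightarrow> lat_abs p \<le> lat_abs (p + (q::'a::{lattice, ordered_real_vector}))"
proof -
  assume d: "disjoint_el p q"
  have "lat_abs p = lat_abs ((p + q) + (-q))" by simp
  also have "\<dots> \<le> lat_abs (p+q) + lat_abs q" using la_triangle la_neg by metis
  finally have h: "lat_abs p \<le> lat_abs (p+q) + lat_abs q" .
  have "lat_abs p = inf (lat_abs p) (lat_abs (p+q) + lat_abs q)" using h by (simp add: inf_absorb1)
  also have "\<dots> \<le> inf (lat_abs p) (lat_abs (p+q)) + inf (lat_abs p) (lat_abs q)"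
    by (rule riesz) (simp_all add: la_nonneg)
  also have "\<dots> = inf (lat_abs p) (lat_abs (p+q))" using d by (simp add: disjoint_el_def)
  also have "\<dots> \<le> lat_abs (p+q)" by simp
  finally show ?thesis .
qed

lemma nm_absle: "lattice_norm TYPE('a::{real_normed_vector, lattice, ordered_real_vector}) \<Longrightarrow>
   lat_abs u \<le> lat_abs (v::'a) \<Longrightarrow> norm u \<le> norm v"
  unfolding lattice_norm_def by blast

lemma nm_abs: "lattice_norm TYPE('a::{real_normed_vector, lattice, ordered_real_vector}) \<Longrightarrow>
   norm (lat_abs (x::'a)) = norm x"
proof -
  assume ln: "lattice_norm TYPE('a)"
  have "norm (lat_abs x) \<le> norm x" by (rule nm_absle[OF ln]) (simp add: la_idem)
  moreover have "norm x \<le> norm (lat_abs x)" by (rule nm_absle[OF ln]) (simp add: la_idem)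
  ultimately show ?thesis by simp
qed

lemma nm_mono: "lattice_norm TYPE('a::{real_normed_vector, lattice, ordered_real_vector}) \<Longrightarrow>
   0 \<le> u \<Longrightarrow> u \<le> (v::'a) \<Longrightarrow> norm u \<le> norm v"
proof -
  assume ln: "lattice_norm TYPE('a)" and u: "0 \<le> u" and uv: "u \<le> v"
  have v: "0 \<le> v" using u uv by simp
  show ?thesis by (rule nm_absle[OF ln]) (simp add: la_of_nonneg u v uv)
qed

lemma atom_seg: "is_atom a \<Longrightarrow> 0 \<le> a \<Longrightarrow> 0 \<le> v \<Longrightarrow> v \<le> (a::'a::{lattice, ordered_real_vector}) \<Longrightarrow>
   \<exists>l. 0 \<le> l \<and> l \<le> 1 \<and> v = l *\<^sub>R a"
proof -
  assume at: "is_atom a" and a: "0 \<le> a" and v: "0 \<le> v" "v \<le> a"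
  have "v \<in> {v. 0 \<le> v \<and> v \<le> lat_abs a}" using v a by (simp add: la_of_nonneg)
  then have "v \<in> {l *\<^sub>R lat_abs a | l. 0 \<le> l \<and> l \<le> 1}" using at unfolding is_atom_def by blast
  then show ?thesis using a by (auto simp: la_of_nonneg)
qed

lemma atom_split: "is_atom a \<Longrightarrow> 0 \<le> a \<Longrightarrow> a = p + q \<Longrightarrow> disjoint_el p q \<Longrightarrow> p = 0 \<or> q = (0::'a::{lattice, ordered_real_vector})"
proof -
  assume at: "is_atom a" and a: "0 \<le> a" and s: "a = p + q" and d: "disjoint_el p q"
  have "lat_abs p \<le> a" using dj_part[OF d] s a by (simp add: la_of_nonneg)
  then obtain l where l: "0 \<le> l" "l \<le> 1" "lat_abs p = l *\<^sub>R a" using atom_seg[OF at a la_nonneg] by blast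
  have "lat_abs q \<le> a" using dj_part[OF dj_sym[OF d]] s a by (simp add: la_of_nonneg add.commute)
  then obtain m where m: "0 \<le> m" "m \<le> 1" "lat_abs q = m *\<^sub>R a" using atom_seg[OF at a la_nonneg] by blast
  have e: "inf (l *\<^sub>R a) (m *\<^sub>R a) = 0" using d l m by (simp add: disjoint_el_def)
  have "min l m *\<^sub>R a = 0"
  proof (cases "l \<le> m")
    case True
    then have "l *\<^sub>R a \<le> m *\<^sub>R a" using a scaleR_right_mono by blast
    then show ?thesis using e True by (simp add: inf_absorb1)
  next
    case False
    then have "m *\<^sub>R a \<le> l *\<^sub>R a" using a scaleR_right_mono by (metis linorder_le_cases)
    then show ?thesis using e False by (simp add: inf_absorb2)
  qed
  then have "min l m = 0 \<or> a = 0" by simp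
  then have "lat_abs p = 0 \<or> lat_abs q = 0" using l m by (auto simp: min_def split: if_splits)
  then show ?thesis using la_zero by blast
qed


lemma decomp_pos:
  fixes a y :: "'a::{real_normed_vector, lattice, ordered_real_vector}"
  assumes ln: "lattice_norm TYPE('a)" and at: "is_atom a" and a0: "0 \<le> a" and a1: "norm a = 1"
    and y: "0 \<le> y"
  shows "\<exists>t. disjoint_el (y - t *\<^sub>R a) a"
proof -
  define S where "S = {t. 0 \<le> t \<and> t *\<^sub>R a \<le> y}"
  have S0: "0 \<in> S" using y by (simp add: S_def)
  have Sb: "t \<le> norm y" if "t \<in> S" for t
  proof -
    have t: "0 \<le> t" "t *\<^sub>R a \<le> y" using that by (auto simp: S_def)
    have "0 \<le> t *\<^sub>R a" using t a0 by (simp add: scaleR_nonneg_nonneg)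
    then have "norm (t *\<^sub>R a) \<le> norm y" using nm_mono[OF ln] t by blast
    then show ?thesis using t a1 by simp
  qed
  have bdd: "bdd_above S" using Sb by (auto simp: bdd_above_def)
  define L where "L = Sup S"
  have LS: "t \<le> L" if "t \<in> S" for t using cSup_upper[OF that bdd] by (simp add: L_def)
  have L0: "0 \<le> L" using LS[OF S0] .
  define d where "d = sup (L *\<^sub>R a - y) 0"
  have d0: "0 \<le> d" by (simp add: d_def)
  have dle: "norm d < e" if e: "0 < e" for e
  proof -
    have "L - e < Sup S" using e by (simp add: L_def)
    then obtain t where t: "t \<in> S" "L - e < t" using less_cSup_iff[of S "L - e"] S0 bdd by blast
    have tL: "t \<le> L" using LS[OF t(1)] .
    have ty: "t *\<^sub>R a \<le> y" using t by (simp add: S_def)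
    have "L *\<^sub>R a - y \<le> L *\<^sub>R a - t *\<^sub>R a" using ty by simp
    also have "\<dots> = (L - t) *\<^sub>R a" by (simp add: scaleR_diff_left)
    finally have h1: "L *\<^sub>R a - y \<le> (L - t) *\<^sub>R a" .
    have h2: "0 \<le> (L - t) *\<^sub>R a" using tL a0 by (simp add: scaleR_nonneg_nonneg)
    have "d \<le> (L - t) *\<^sub>R a" unfolding d_def using h1 h2 by simp
    then have "norm d \<le> norm ((L - t) *\<^sub>R a)" using nm_mono[OF ln d0] by blast
    also have "\<dots> = L - t" using a1 tL by simp
    finally show ?thesis using t by simp
  qed
  have "d = 0"
  proof (rule ccontr)
    assume "d \<noteq> 0"
    then have "0 < norm d" by simp
    from dle[OF this] show False by simp
  qed
  then have La: "L *\<^sub>R a \<le> y" unfolding d_def by (metis diff_le_0_iff_le sup.cobounded1)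
  define r where "r = y - L *\<^sub>R a"
  have r0: "0 \<le> r" using La by (simp add: r_def)
  have v: "0 \<le> inf r a" "inf r a \<le> a" using r0 a0 by simp_all
  obtain m where m: "0 \<le> m" "m \<le> 1" "inf r a = m *\<^sub>R a" using atom_seg[OF at a0 v] by blast
  have "m *\<^sub>R a \<le> r" using m(3) by (metis inf.cobounded1)
  then have "(L + m) *\<^sub>R a \<le> y" by (simp add: r_def scaleR_add_left le_diff_eq add.commute)
  then have "L + m \<in> S" using L0 m by (simp add: S_def)
  then have "m = 0" using LS m by fastforce
  then have "inf r a = 0" using m by simp
  then have "disjoint_el r a" using r0 a0 by (simp add: disjoint_el_def la_of_nonneg)
  then show ?thesis unfolding r_def by blast
qed

lemma decomp:
  fixes a w :: "'a::{real_normed_vector, lattice, ordered_real_vector}"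
  assumes ln: "lattice_norm TYPE('a)" and at: "is_atom a" and a0: "0 \<le> a" and a1: "norm a = 1"
  shows "\<exists>t. disjoint_el (w - t *\<^sub>R a) a"
proof -
  have w: "w = sup w 0 - sup (-w) 0"
  proof -
    have "sup w 0 + (-w) = sup (w + -w) (0 + -w)" by (rule sup_add_distrib)
    then have "sup w 0 - w = sup 0 (-w)" by simp
    then show ?thesis by (simp add: sup_commute algebra_simps)
  qed
  obtain s where s: "disjoint_el (sup w 0 - s *\<^sub>R a) a" using decomp_pos[OF ln at a0 a1, of "sup w 0"] by auto
  obtain t where t: "disjoint_el (sup (-w) 0 - t *\<^sub>R a) a" using decomp_pos[OF ln at a0 a1, of "sup (-w) 0"] by auto
  have "disjoint_el ((sup w 0 - s *\<^sub>R a) - (sup (-w) 0 - t *\<^sub>R a)) a" using dj_diff[OF s t] .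
  moreover have "(sup w 0 - s *\<^sub>R a) - (sup (-w) 0 - t *\<^sub>R a) = w - (s - t) *\<^sub>R a"
    by (subst w) (simp add: algebra_simps)
  ultimately show ?thesis by auto
qed

lemma decomp_uniq:
  fixes a w :: "'a::{lattice, ordered_real_vector}"
  assumes a0: "0 \<le> a" "a \<noteq> 0"
    and s: "disjoint_el (w - s *\<^sub>R a) a" and t: "disjoint_el (w - t *\<^sub>R a) a"
  shows "s = t"
proof -
  have "disjoint_el ((w - s *\<^sub>R a) - (w - t *\<^sub>R a)) a" using dj_diff[OF s t] .
  moreover have "(w - s *\<^sub>R a) - (w - t *\<^sub>R a) = (t - s) *\<^sub>R a" by (simp add: algebra_simps)
  ultimately have "t - s = 0" using dj_self_scale[OF a0] by metis
  then show ?thesis by simp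
qed

definition coef :: "'a::{lattice, ordered_real_vector} \<Rightarrow> 'a \<Rightarrow> real" where
  "coef a w = (THE t. disjoint_el (w - t *\<^sub>R a) a)"

lemma coef_eq:
  fixes a w :: "'a::{lattice, ordered_real_vector}"
  assumes a0: "0 \<le> a" "a \<noteq> 0" and t: "disjoint_el (w - t *\<^sub>R a) a"
  shows "coef a w = t"
  unfolding coef_def by (rule the_equality[where P="\<lambda>t. disjoint_el (w - t *\<^sub>R a) a", OF t]) (rule decomp_uniq[OF a0 _ t])


context
  fixes a :: "'a::{banach, lattice, ordered_real_vector}"
  assumes ln: "lattice_norm TYPE('a)" and at: "is_atom a" and a0: "0 \<le> a" and a1: "norm a = 1"
begin

lemma an0: "a \<noteq> 0" using a1 by auto

lemma coef_prop: "disjoint_el (w - coef a w *\<^sub>R a) a"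
proof -
  obtain t where t: "disjoint_el (w - t *\<^sub>R a) a" using decomp[OF ln at a0 a1] by blast
  then show ?thesis using coef_eq[OF a0 an0 t] by simp
qed

lemma coef_eq': "disjoint_el (w - t *\<^sub>R a) a \<Longrightarrow> coef a w = t"
  using coef_eq[OF a0 an0] by blast

lemma coef_add: "coef a (v + w) = coef a v + coef a w"
proof (rule coef_eq')
  have "disjoint_el ((v - coef a v *\<^sub>R a) + (w - coef a w *\<^sub>R a)) a" by (rule dj_add[OF coef_prop coef_prop])
  then show "disjoint_el (v + w - (coef a v + coef a w) *\<^sub>R a) a" by (simp add: algebra_simps)
qed

lemma coef_scale: "coef a (r *\<^sub>R w) = r * coef a w"
proof (rule coef_eq')
  have "disjoint_el (r *\<^sub>R (w - coef a w *\<^sub>R a)) a" by (rule dj_scale[OF coef_prop])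
  then show "disjoint_el (r *\<^sub>R w - (r * coef a w) *\<^sub>R a) a" by (simp add: algebra_simps)
qed

lemma coef_bound: "\<bar>coef a w\<bar> \<le> norm w"
proof -
  let ?c = "coef a w"
  have d: "disjoint_el (?c *\<^sub>R a) (w - ?c *\<^sub>R a)"
    using dj_scale[OF dj_sym[OF coef_prop]] .
  have "lat_abs (?c *\<^sub>R a) \<le> lat_abs (?c *\<^sub>R a + (w - ?c *\<^sub>R a))" by (rule dj_part[OF d])
  then have "norm (?c *\<^sub>R a) \<le> norm (?c *\<^sub>R a + (w - ?c *\<^sub>R a))" by (rule nm_absle[OF ln])
  then show ?thesis using a1 by simp
qed

lemma coef_bl: "bounded_linear (coef a)"
  by (rule bounded_linear_intro[where K=1]) (auto simp: coef_add coef_scale coef_bound)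

lemma coef_cont: "continuous_on UNIV (coef a)"
  using coef_bl linear_continuous_on by blast

lemma coef_self: "coef a a = 1"
  by (rule coef_eq') (simp add: disjoint_el_def la_of_nonneg a0 inf_absorb1)

lemma iso_inv:
  assumes T: "T \<in> isometry_group"
  shows "inv T \<in> isometry_group" "\<And>x. inv T (T x) = x" "\<And>x. T (inv T x) = x"
proof -
  have lT: "linear T" and sT: "surj T" and nT: "\<And>x. norm (T x) = norm x"
    using T by (auto simp: isometry_group_def)
  have iT: "inj T"
  proof (rule injI)
    fix x y assume "T x = T y"
    then have "norm (T (x - y)) = 0" using lT by (simp add: linear_diff)
    then show "x = y" using nT by simp
  qed
  show ii: "\<And>x. inv T (T x) = x" using iT by simp
  show ff: "\<And>x. T (inv T x) = x" using sT by (simp add: surj_f_inv_f)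
  have "linear (inv T)"
  proof (rule linearI)
    fix x y
    have "T (inv T x + inv T y) = x + y" using lT ff by (simp add: linear_add)
    then show "inv T (x + y) = inv T x + inv T y" by (metis ii)
  next
    fix r x
    have "T (r *\<^sub>R inv T x) = r *\<^sub>R x" using lT ff by (simp add: linear_scale)
    then show "inv T (r *\<^sub>R x) = r *\<^sub>R inv T x" by (metis ii)
  qed
  moreover have "surj (inv T)" by (metis ii surjI)
  moreover have "\<And>x. norm (inv T x) = norm x" by (metis ff nT)
  ultimately show "inv T \<in> isometry_group" by (simp add: isometry_group_def)
qed

lemma atom_image:
  assumes T: "T \<in> isometry_group"
    and dp: "\<forall>T\<in>(isometry_group :: ('a \<Rightarrow> 'a) set). disjointness_preserving T"
  shows "coef a (T a) = 0 \<or> T a = a \<or> T a = -a"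
proof -
  let ?t = "coef a (T a)"
  define R where "R = T a - ?t *\<^sub>R a"
  define S where "S = inv T"
  have SG: "S \<in> isometry_group" using iso_inv[OF T] by (simp add: S_def)
  have lS: "linear S" and nS: "\<And>x. norm (S x) = norm x" using SG by (auto simp: isometry_group_def)
  have dR: "disjoint_el (?t *\<^sub>R a) R" using dj_scale[OF dj_sym[OF coef_prop[of "T a"]]] by (simp add: R_def)
  have dS: "disjoint_el (S (?t *\<^sub>R a)) (S R)" using dp SG dR by (simp add: disjointness_preserving_def)
  have "a = S (T a)" using iso_inv[OF T] by (simp add: S_def)
  also have "T a = ?t *\<^sub>R a + R" by (simp add: R_def)
  finally have "a = S (?t *\<^sub>R a) + S R" using lS by (simp add: linear_add)
  then have "S (?t *\<^sub>R a) = 0 \<or> S R = 0" using atom_split[OF at a0 _ dS] by blast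
  then show ?thesis
  proof
    assume "S (?t *\<^sub>R a) = 0"
    then have "norm (S (?t *\<^sub>R a)) = 0" by simp
    then have "\<bar>?t\<bar> = 0" using nS a1 by simp
    then show ?thesis by simp
  next
    assume "S R = 0"
    then have "R = 0" using nS by (metis norm_eq_zero)
    then have Ta: "T a = ?t *\<^sub>R a" by (simp add: R_def)
    have "norm (T a) = 1" using T a1 by (simp add: isometry_group_def)
    moreover have "norm (T a) = \<bar>?t\<bar> * norm a" using Ta by (metis norm_scaleR)
    ultimately have "\<bar>?t\<bar> = 1" using a1 by simp
    then have "?t = 1 \<or> ?t = -1" by auto
    then show ?thesis using Ta by auto
  qed
qed

end

theorem theorem4p2:
  assumes "banach_lattice TYPE('a::{banach, lattice, ordered_real_vector})"
    and "convex_transitive TYPE('a)"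
    and "\<forall>T\<in>(isometry_group :: ('a \<Rightarrow> 'a) set). disjointness_preserving T"
    and "\<exists>x::'a. norm x = 1 \<and> is_atom x"
  shows "\<exists>e::'a. e \<noteq> 0 \<and> span {e} = UNIV"
proof -
  have ln: "lattice_norm TYPE('a)" using assms(1) by (simp add: banach_lattice_def)
  have ct: "\<And>y::'a. norm y = 1 \<Longrightarrow> closure (convex hull {T y | T. T \<in> isometry_group}) = cball 0 1"
    using assms(2) by (simp add: convex_transitive_def)
  note dp = assms(3)
  obtain x :: 'a where x: "norm x = 1" "is_atom x" using assms(4) by blast
  define a where "a = lat_abs x"
  have a0: "0 \<le> a" by (simp add: a_def la_nonneg)
  have a1: "norm a = 1" using x nm_abs[OF ln] by (simp add: a_def)
  have at: "is_atom a" using x(2) a1 unfolding is_atom_def a_def la_idem by auto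
  have an0: "a \<noteq> 0" using a1 by auto
  note L = coef_prop[OF ln at a0 a1] coef_eq'[OF ln at a0 a1] coef_add[OF ln at a0 a1]
    coef_scale[OF ln at a0 a1] coef_bound[OF ln at a0 a1] coef_cont[OF ln at a0 a1]
    coef_self[OF ln at a0 a1] atom_image[OF ln at a0 a1 _ dp]
  have "span {a} = UNIV"
  proof (rule ccontr)
    assume "span {a} \<noteq> UNIV"
    then obtain w where w: "w \<notin> span {a}" by blast
    define R where "R = w - coef a w *\<^sub>R a"
    have dR: "disjoint_el R a" using L(1) by (simp add: R_def)
    have R0: "R \<noteq> 0"
    proof
      assume "R = 0"
      then have "w = coef a w *\<^sub>R a" by (simp add: R_def)
      then have "w \<in> span {a}" by (metis span_base span_mul singletonI)
      then show False using w by simp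
    qed
    define z where "z = (1 / norm R) *\<^sub>R R"
    have dz: "disjoint_el z a" using dj_scale[OF dR] by (simp add: z_def)
    have z1: "norm z = 1" using R0 by (simp add: z_def)
    have daz: "disjoint_el a z" using dj_sym[OF dz] .
    have cz: "coef a z = 0" using L(2)[of z 0] dz by simp
    have caz: "coef a (a + z) = 1" using L(3) L(7) cz by simp
    have cneg: "coef a (-a) = -1" using L(4)[of "-1" a] L(7) by simp
    show False
    proof (cases "norm (a + z) > 1")
      case True
      define c where "c = norm (a + z)"
      have c1: "1 < c" using True by (simp add: c_def)
      define y where "y = (1 / c) *\<^sub>R (a + z)"
      have az: "a + z \<noteq> 0" using c1 by (auto simp: c_def)
      have y1: "norm y = 1" using c1 az by (simp add: y_def c_def)
      define H where "H = {v. coef a v \<le> 1 / c}"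
      have Hc: "closed H" unfolding H_def by (rule closed_Collect_le[OF L(6)]) (rule continuous_on_const)
      have Hv: "convex H" unfolding H_def
      proof (rule convexI)
        fix u v and p q :: real assume h: "u \<in> {v. coef a v \<le> 1 / c}" "v \<in> {v. coef a v \<le> 1 / c}" "0 \<le> p" "0 \<le> q" "p + q = 1"
        have "p * coef a u + q * coef a v \<le> p * (1/c) + q * (1/c)"
          using h by (intro add_mono mult_left_mono) auto
        then show "p *\<^sub>R u + q *\<^sub>R v \<in> {v. coef a v \<le> 1 / c}" using h(5)
          by (simp add: L(3) L(4) add_divide_distrib[symmetric])
      qed
      have gen: "{T y | T. T \<in> isometry_group} \<subseteq> H"
      proof clarify
        fix T :: "'a \<Rightarrow> 'a" assume T: "T \<in> isometry_group"
        have lT: "linear T" and nT: "\<And>x. norm (T x) = norm x" using T by (auto simp: isometry_group_def)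
        have Ty: "T y = (1/c) *\<^sub>R (T a + T z)" using lT by (simp add: y_def linear_add linear_scale)
        have dT: "disjoint_el (T a) (T z)" using dp T daz by (simp add: disjointness_preserving_def)
        have "coef a (T a) + coef a (T z) \<le> 1"
        proof -
          consider "coef a (T a) = 0" | "T a = a" | "T a = -a" using L(8)[OF T] by blast
          then show ?thesis
          proof cases
            case 1
            then show ?thesis using L(5)[of "T z"] nT z1 by simp
          next
            case 2
            then have "coef a (T z) = 0" using L(2)[of "T z" 0] dT dj_sym by fastforce
            then show ?thesis using 2 L(7) by simp
          next
            case 3
            then have "disjoint_el a (T z)" using dj_neg[of "T a" "T z"] dT by simp
            then have "coef a (T z) = 0" using L(2)[of "T z" 0] dj_sym by fastforce
            then show ?thesis using 3 cneg by simp
          qed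
        qed
        then have "(1/c) * (coef a (T a) + coef a (T z)) \<le> (1/c) * 1"
          using c1 by (intro mult_left_mono) auto
        then show "T y \<in> H" unfolding H_def using Ty by (simp add: L(3) L(4))
      qed
      have "cball 0 1 \<subseteq> H"
        using ct[OF y1] closure_minimal[OF hull_minimal[where S=convex, OF gen Hv] Hc] by simp
      then have "a \<in> H" using a1 by auto
      then have "1 \<le> 1 / c" using L(7) by (simp add: H_def)
      then show False using c1 by (simp add: divide_simps)
    next
      case False
      define K where "K = {v. norm (v - a) \<le> 2 * (1 - coef a v)}"
      have cc1: "continuous_on UNIV (\<lambda>v. norm (v - a))" by (intro continuous_intros)
      have cc2: "continuous_on UNIV (\<lambda>v. 2 * (1 - coef a v))" using L(6) by (intro continuous_intros)
      have Kc: "closed K" unfolding K_def by (rule closed_Collect_le[OF cc1 cc2])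
      have Kv: "convex K" unfolding K_def
      proof (rule convexI)
        fix u v and p q :: real assume h: "u \<in> {v. norm (v - a) \<le> 2 * (1 - coef a v)}" "v \<in> {v. norm (v - a) \<le> 2 * (1 - coef a v)}" "0 \<le> p" "0 \<le> q" "p + q = 1"
        have e: "p *\<^sub>R u + q *\<^sub>R v - a = p *\<^sub>R (u - a) + q *\<^sub>R (v - a)"
          using h(5) by (simp add: algebra_simps scaleR_add_left[symmetric])
        have "norm (p *\<^sub>R u + q *\<^sub>R v - a) \<le> p * norm (u - a) + q * norm (v - a)"
          unfolding e using h(3,4) norm_triangle_ineq[of "p *\<^sub>R (u - a)" "q *\<^sub>R (v - a)"] by simp
        also have "\<dots> \<le> p * (2 * (1 - coef a u)) + q * (2 * (1 - coef a v))"
          using h by (intro add_mono mult_left_mono) auto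
        also have "\<dots> = 2 * (1 - coef a (p *\<^sub>R u + q *\<^sub>R v))"
          using h(5) by (simp add: L(3) L(4) algebra_simps)
        finally show "p *\<^sub>R u + q *\<^sub>R v \<in> {v. norm (v - a) \<le> 2 * (1 - coef a v)}" by simp
      qed
      have gen: "{T a | T. T \<in> isometry_group} \<subseteq> K"
      proof clarify
        fix T :: "'a \<Rightarrow> 'a" assume T: "T \<in> isometry_group"
        have nT: "norm (T a) = 1" using T a1 by (simp add: isometry_group_def)
        consider "coef a (T a) = 0" | "T a = a" | "T a = -a" using L(8)[OF T] by blast
        then show "T a \<in> K"
        proof cases
          case 1
          have "norm (T a - a) \<le> norm (T a) + norm a" by (rule norm_triangle_ineq4)
          then show ?thesis using 1 nT a1 by (simp add: K_def)
        next
          case 2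
          then show ?thesis using L(7) by (simp add: K_def)
        next
          case 3
          have "-a - a = - (2 *\<^sub>R a)" by (simp add: scaleR_2)
          then have "norm (-a - a) = norm (2 *\<^sub>R a)" by (metis norm_minus_cancel)
          then have "norm (-a - a) = 2" using a1 by simp
          then show ?thesis using 3 cneg by (simp add: K_def)
        qed
      qed
      have "cball 0 1 \<subseteq> K"
        using ct[OF a1] closure_minimal[OF hull_minimal[where S=convex, OF gen Kv] Kc] by simp
      moreover have "a + z \<in> cball 0 1" using False by simp
      ultimately have "a + z \<in> K" by blast
      then have "norm z \<le> 0" using caz by (simp add: K_def)
      then show False using z1 by simp
    qed
  qed
  then show ?thesis using an0 by blast
qed

end
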